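(* Let $X_1,X_2,\ldots$ be i.i.d. random variables with $\mathbb E X_k=0$, $\operatorname{Var}X_k=1$, such that $\varphi(t)=\log\mathbb Ee^{tX_1}$ is finite on $[0,t_0)$ for some $t_0>0$. Assume that for some $\alpha<2$ we have $\mathbb P[X_1>x]>e^{-x^\alpha}$ for all sufficiently large $x$. Then for every $a>0$, $$\lim_{n\to\infty}\mathbb P[\mathbf M_n=\mathbf M_n(1,a\log n)]=1.$$
   Context: $S_0=0$, $S_k=X_1+\cdots+X_k$, $\mathbf M_n=\max_{0\leq i<j\leq n}\frac{S_j-S_i}{\sqrt{j-i}}$, and for $0\leq h_1<h_2$, $\mathbf M_n(h_1,h_2)$ is the same maximum restricted to pairs with $h_1\leq j-i\leq h_2$. *)

theory Defs
  imports "HOL-Probability.Probability"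
begin

definition psum :: "(nat \<Rightarrow> real) \<Rightarrow> nat \<Rightarrow> real" where
  "psum x k = (\<Sum>i\<in>{1..k}. x i)"

definition Mn :: "(nat \<Rightarrow> real) \<Rightarrow> nat \<Rightarrow> real" where
  "Mn s n = Max {(s j - s i) / sqrt (real (j - i)) | i j. i < j \<and> j \<le> n}"

definition Mn_restr :: "(nat \<Rightarrow> real) \<Rightarrow> nat \<Rightarrow> real \<Rightarrow> real \<Rightarrow> real" where
  "Mn_restr s n h1 h2 = Max {(s j - s i) / sqrt (real (j - i)) | i j.
      i < j \<and> j \<le> n \<and> h1 \<le> real (j - i) \<and> real (j - i) \<le> h2}"

end

theory Submission imports Defs "HOL-Real_Asymp.Real_Asymp" begin

lemma exp_quad_bound:
  fixes t t1 x :: real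
  assumes "t1 > 0" "0 \<le> t" "t \<le> t1"
  shows "exp (t * x) \<le> 1 + t * x + t\<^sup>2 * (x\<^sup>2 / 2 + exp (2 * t1 * x) / t1\<^sup>2)"
proof -
  have nn: "0 \<le> t\<^sup>2 * (exp (2 * t1 * x) / t1\<^sup>2)" by simp
  have nn2: "0 \<le> t\<^sup>2 * (x\<^sup>2/2)" by simp
  show ?thesis
  proof (cases "x \<le> 0")
    case True
    obtain s where "exp (t*x) = (\<Sum>m<3. (t*x) ^ m / fact m) + exp s / fact 3 * (t*x) ^ 3"
      using Maclaurin_exp_le by blast
    moreover have "(t*x)^3 \<le> 0" using True assms
      by (metis mult_nonneg_nonpos odd_pos odd_numeral power_le_zero_eq zero_less_numeral) 
    hence "exp s / fact 3 * (t*x) ^ 3 \<le> 0" by (intro mult_nonneg_nonpos) auto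
    ultimately have "exp (t*x) \<le> 1 + t*x + (t*x)^2/2"
      by (simp add: numeral_3_eq_3 eval_nat_numeral)
    moreover have "(t*x)^2/2 = t\<^sup>2 * (x\<^sup>2/2)" by (simp add: power_mult_distrib)
    moreover have "t\<^sup>2 * (x\<^sup>2 / 2 + exp (2 * t1 * x) / t1\<^sup>2) = t\<^sup>2 * (x\<^sup>2/2) + t\<^sup>2 * (exp (2 * t1 * x) / t1\<^sup>2)"
      by (simp add: distrib_left)
    ultimately show ?thesis using nn by linarith
  next
    case False
    obtain s where s: "\<bar>s\<bar> \<le> \<bar>t*x\<bar>" "exp (t*x) = (\<Sum>m<2. (t*x) ^ m / fact m) + exp s / fact 2 * (t*x) ^ 2"
      using Maclaurin_exp_le by blast
    have "t*x \<le> t1*x" using assms False by (intro mult_right_mono) auto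
    moreover have "\<bar>t*x\<bar> = t*x" using assms False by simp
    ultimately have "s \<le> t1 * x" using s(1) by linarith
    hence es: "exp s \<le> exp (t1 * x)" by simp
    obtain r where r: "exp (t1*x) = (\<Sum>m<3. (t1*x) ^ m / fact m) + exp r / fact 3 * (t1*x) ^ 3"
      using Maclaurin_exp_le by blast
    have "0 \<le> exp r / fact 3 * (t1*x) ^ 3" using False assms by simp
    hence "(t1*x)^2/2 \<le> exp (t1*x)" using r False assms
      by (simp add: numeral_3_eq_3 eval_nat_numeral)
    hence "x\<^sup>2 * t1\<^sup>2 \<le> 2 * exp (t1*x)" by (simp add: power_mult_distrib mult.commute)
    hence x2: "x\<^sup>2 \<le> 2 * exp (t1*x) / t1\<^sup>2" using assms
      by (simp add: pos_le_divide_eq)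
    have e1: "exp (t*x) = 1 + t*x + exp s * (t*x)^2/2" using s(2) by (simp add: eval_nat_numeral)
    have e2: "exp s * (t*x)^2/2 \<le> exp (t1*x) * (t*x)^2/2"
      using es by (intro divide_right_mono mult_right_mono) auto
    have e3: "exp (t1*x) * (t*x)^2/2 = t^2 * (exp (t1*x) * x^2 / 2)" by (simp add: power_mult_distrib)
    have e4: "exp (t1*x) * x^2 / 2 \<le> exp (t1*x) * (2 * exp (t1*x) / t1\<^sup>2) / 2"
    proof -
      have "exp (t1*x) * x^2 \<le> exp (t1*x) * (2 * exp (t1*x) / t1\<^sup>2)"
        by (rule mult_left_mono[OF x2]) simp
      then show ?thesis by (rule divide_right_mono) simp
    qed
    have e5: "exp (t1*x) * (2 * exp (t1*x) / t1\<^sup>2) / 2 = exp (2*t1*x) / t1\<^sup>2"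
    proof -
      have "exp (2*t1*x) = exp(t1*x) * exp(t1*x)"
        by (simp only: exp_add[symmetric]) (simp add: algebra_simps)
      then show ?thesis by simp
    qed
    have e6: "t^2 * (exp (t1*x) * x^2 / 2) \<le> t^2 * (exp (2*t1*x) / t1\<^sup>2)"
      using e4 e5 by (intro mult_left_mono) auto
    have "exp (t*x) \<le> 1 + t*x + t^2 * (exp (2*t1*x) / t1\<^sup>2)"
      using e1 e2 e3 e6 by linarith
    moreover have "t\<^sup>2 * (x\<^sup>2 / 2 + exp (2 * t1 * x) / t1\<^sup>2) = t\<^sup>2 * (x\<^sup>2/2) + t\<^sup>2 * (exp (2 * t1 * x) / t1\<^sup>2)"
      by (simp add: distrib_left)
    ultimately show ?thesis using nn2 by linarith
  qed
qed

lemma Mn_alt: "Mn s n = Max ((\<lambda>(i,j). (s j - s i) / sqrt (real (j - i))) ` {(i,j). i < j \<and> j \<le> n})"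
  unfolding Mn_def by (rule arg_cong[where f=Max]) auto

lemma Mn_restr_alt: "Mn_restr s n h1 h2 = Max ((\<lambda>(i,j). (s j - s i) / sqrt (real (j - i))) `
    {(i,j). i < j \<and> j \<le> n \<and> h1 \<le> real (j - i) \<and> real (j - i) \<le> h2})"
  unfolding Mn_restr_def by (rule arg_cong[where f=Max]) auto

lemma max_eq_pure:
  fixes s :: "nat \<Rightarrow> real"
  assumes L: "1 \<le> L" and k: "k \<in> {1..n}" and yk: "y < s k - s (k - 1)"
    and long: "\<And>i j. i < j \<Longrightarrow> j \<le> n \<Longrightarrow> L < real (j - i) \<Longrightarrow> (s j - s i) / sqrt (real (j - i)) \<le> y"
  shows "Mn s n = Mn_restr s n 1 L"
proof -
  define f where "f = (\<lambda>(i,j). (s j - s i) / sqrt (real (j - i)))"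
  define PA where "PA = {(i,j). i < j \<and> j \<le> n}"
  define PB where "PB = {(i::nat,j). i < j \<and> j \<le> n \<and> 1 \<le> real (j - i) \<and> real (j - i) \<le> L}"
  have fPA: "finite PA" by (rule finite_subset[of _ "{..n} \<times> {..n}"]) (auto simp: PA_def)
  have sub: "PB \<subseteq> PA" by (auto simp: PA_def PB_def)
  have kB: "(k - 1, k) \<in> PB" using k L by (auto simp: PB_def)
  have fk: "f (k - 1, k) = s k - s (k - 1)" using k by (simp add: f_def)
  have fA: "finite (f ` PA)" using fPA by simp
  have fB: "finite (f ` PB)" using fPA sub finite_subset by blast
  have neB: "f ` PB \<noteq> {}" using kB by auto
  have le1: "Max (f ` PB) \<le> Max (f ` PA)"
    by (rule Max_mono) (use sub neB fA in auto)
  have "Max (f ` PA) \<in> f ` PA" using fA neB sub by (intro Max_in) auto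
  then obtain i j where ij: "(i,j) \<in> PA" "Max (f ` PA) = f (i,j)" by auto
  have le2: "Max (f ` PA) \<le> Max (f ` PB)"
  proof (cases "real (j - i) \<le> L")
    case True
    then have "(i,j) \<in> PB" using ij(1) by (auto simp: PA_def PB_def)
    then show ?thesis using ij(2) fB by (auto intro: Max_ge)
  next
    case False
    then have "f (i,j) \<le> y" using long[of i j] ij(1) by (auto simp: PA_def f_def)
    also have "y < f (k - 1, k)" using yk fk by simp
    also have "f (k - 1, k) \<le> Max (f ` PB)" using kB fB by (auto intro: Max_ge)
    finally show ?thesis using ij(2) by simp
  qed
  show ?thesis unfolding Mn_alt Mn_restr_alt
    using le1 le2 by (simp add: f_def PA_def PB_def)
qed

lemma eventually_powr_ge:
  fixes e C :: real
  assumes "e > 0"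
  shows "eventually (\<lambda>u. C \<le> u powr e) at_top"
proof -
  have "C \<le> u powr e" if "u \<ge> max 1 (\<bar>C\<bar> powr (1/e))" for u
  proof -
    have "\<bar>C\<bar> = (\<bar>C\<bar> powr (1/e)) powr e"
      using assms by (cases "C = 0") (auto simp: powr_powr)
    also have "\<dots> \<le> u powr e" using that assms by (intro powr_mono2) auto
    finally show ?thesis by linarith
  qed
  then show ?thesis unfolding eventually_at_top_linorder by blast
qed

locale iidX = prob_space +
  fixes X :: "nat \<Rightarrow> 'a \<Rightarrow> real"
  assumes measX: "\<And>i. i \<ge> 1 \<Longrightarrow> X i \<in> borel_measurable M"
    and indepX: "indep_vars (\<lambda>_. borel) X {1..}"
    and identX: "\<And>i. i \<ge> 1 \<Longrightarrow> distr M borel (X i) = distr M borel (X 1)"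
begin

lemma integrable_same:
  fixes g :: "real \<Rightarrow> real"
  assumes "i \<ge> 1" "g \<in> borel_measurable borel"
  shows "integrable M (\<lambda>\<omega>. g (X i \<omega>)) \<longleftrightarrow> integrable M (\<lambda>\<omega>. g (X 1 \<omega>))"
proof -
  have "integrable M (\<lambda>\<omega>. g (X i \<omega>)) \<longleftrightarrow> integrable (distr M borel (X i)) g"
    using integrable_distr_eq[OF measX[OF assms(1)] assms(2)] by (rule sym)
  also have "\<dots> \<longleftrightarrow> integrable (distr M borel (X 1)) g" using identX[OF assms(1)] by simp
  also have "\<dots> \<longleftrightarrow> integrable M (\<lambda>\<omega>. g (X 1 \<omega>))"
    by (rule integrable_distr_eq[OF measX assms(2)]) simp
  finally show ?thesis .
qed

lemma integral_same:
  fixes g :: "real \<Rightarrow> real"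
  assumes "i \<ge> 1" "g \<in> borel_measurable borel"
  shows "(\<integral>\<omega>. g (X i \<omega>) \<partial>M) = (\<integral>\<omega>. g (X 1 \<omega>) \<partial>M)"
proof -
  have "(\<integral>\<omega>. g (X i \<omega>) \<partial>M) = integral\<^sup>L (distr M borel (X i)) g"
    using integral_distr[OF measX[OF assms(1)] assms(2)] by (rule sym)
  also have "\<dots> = integral\<^sup>L (distr M borel (X 1)) g" using identX[OF assms(1)] by simp
  also have "\<dots> = (\<integral>\<omega>. g (X 1 \<omega>) \<partial>M)"
    by (rule integral_distr[OF measX assms(2)]) simp
  finally show ?thesis .
qed

lemma prob_same:
  assumes "i \<ge> 1" "S \<in> sets borel"
  shows "prob (X i -` S \<inter> space M) = prob (X 1 -` S \<inter> space M)"
proof -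
  have "prob (X i -` S \<inter> space M) = measure (distr M borel (X i)) S"
    by (rule measure_distr[symmetric]) (use measX assms in auto)
  also have "\<dots> = measure (distr M borel (X 1)) S" using identX[OF assms(1)] by simp
  also have "\<dots> = prob (X 1 -` S \<inter> space M)"
    by (rule measure_distr) (use measX assms in auto)
  finally show ?thesis .
qed

lemma mgf_window:
  assumes I: "finite I" "I \<subseteq> {1..}" and int: "integrable M (\<lambda>\<omega>. exp (t * X 1 \<omega>))"
  shows "integrable M (\<lambda>\<omega>. exp (t * (\<Sum>k\<in>I. X k \<omega>)))"
    and "(\<integral>\<omega>. exp (t * (\<Sum>k\<in>I. X k \<omega>)) \<partial>M) = (\<integral>\<omega>. exp (t * X 1 \<omega>) \<partial>M) ^ card I"
proof -
  have eq: "exp (t * (\<Sum>k\<in>I. X k \<omega>)) = (\<Prod>k\<in>I. exp (t * X k \<omega>))" for \<omega>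
    using I by (simp add: sum_distrib_left exp_sum)
  have ind: "indep_vars (\<lambda>_. borel) (\<lambda>k \<omega>. exp (t * X k \<omega>)) I"
    by (rule indep_vars_compose2[OF indep_vars_subset[OF indepX I(2)], of "\<lambda>k x. exp (t*x)"]) auto
  have intk: "integrable M (\<lambda>\<omega>. exp (t * X k \<omega>))" if "k \<in> I" for k
    using integrable_same[of k "\<lambda>x. exp (t*x)"] that I int by auto
  show "integrable M (\<lambda>\<omega>. exp (t * (\<Sum>k\<in>I. X k \<omega>)))"
    unfolding eq by (rule indep_vars_integrable[OF I(1) ind intk])
  have "(\<integral>\<omega>. exp (t * (\<Sum>k\<in>I. X k \<omega>)) \<partial>M) = (\<Prod>k\<in>I. \<integral>\<omega>. exp (t * X k \<omega>) \<partial>M)"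
    unfolding eq by (rule indep_vars_lebesgue_integral[OF I(1) ind intk])
  also have "\<dots> = (\<Prod>k\<in>I. \<integral>\<omega>. exp (t * X 1 \<omega>) \<partial>M)"
    by (intro prod.cong refl integral_same) (use I in auto)
  finally show "(\<integral>\<omega>. exp (t * (\<Sum>k\<in>I. X k \<omega>)) \<partial>M) = (\<integral>\<omega>. exp (t * X 1 \<omega>) \<partial>M) ^ card I"
    by (simp only: prod_constant)
qed

lemma chernoff:
  assumes I: "finite I" "I \<subseteq> {1..}" and int: "integrable M (\<lambda>\<omega>. exp (t * X 1 \<omega>))"
    and t: "t \<ge> 0"
  shows "prob {\<omega> \<in> space M. c \<le> (\<Sum>k\<in>I. X k \<omega>)} \<le> exp (- (t * c)) * (\<integral>\<omega>. exp (t * X 1 \<omega>) \<partial>M) ^ card I"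
proof -
  have mk[measurable]: "X k \<in> borel_measurable M" if "k \<in> I" for k using I that measX by auto
  let ?u = "\<lambda>\<omega>. exp (t * (\<Sum>k\<in>I. X k \<omega>))"
  have sub: "{\<omega> \<in> space M. c \<le> (\<Sum>k\<in>I. X k \<omega>)} \<subseteq> {\<omega> \<in> space M. ?u \<omega> \<ge> exp (t * c)}"
    using t by (auto intro: mult_left_mono)
  have ms: "{\<omega> \<in> space M. ?u \<omega> \<ge> exp (t * c)} \<in> events" by measurable
  have "prob {\<omega> \<in> space M. c \<le> (\<Sum>k\<in>I. X k \<omega>)} \<le> prob {\<omega> \<in> space M. ?u \<omega> \<ge> exp (t * c)}"
    by (rule finite_measure_mono[OF sub ms])
  also have "\<dots> \<le> (\<integral>\<omega>. ?u \<omega> \<partial>M) / exp (t * c)"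
    by (rule integral_Markov_inequality_measure[OF mgf_window(1)[OF I int], of "space M"]) auto
  also have "\<dots> = exp (- (t * c)) * (\<integral>\<omega>. exp (t * X 1 \<omega>) \<partial>M) ^ card I"
    using mgf_window(2)[OF I int] by (simp add: exp_minus field_simps)
  finally show ?thesis .
qed

lemma all_le:
  assumes "n \<ge> 1"
  shows "prob {\<omega> \<in> space M. \<forall>k\<in>{1..n}. X k \<omega> \<le> y} = prob {\<omega> \<in> space M. X 1 \<omega> \<le> y} ^ n"
proof -
  have eq: "{\<omega> \<in> space M. \<forall>k\<in>{1..n}. X k \<omega> \<le> y} = (\<Inter>k\<in>{1..n}. X k -` {..y} \<inter> space M)"
    using assms by auto
  have ind: "indep_sets (\<lambda>i. sigma_sets (space M) { X i -` A \<inter> space M | A. A \<in> sets borel}) {1..}"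
    using indepX unfolding indep_vars_def by auto
  have "prob (\<Inter>k\<in>{1..n}. X k -` {..y} \<inter> space M) = (\<Prod>k\<in>{1..n}. prob (X k -` {..y} \<inter> space M))"
  proof (rule indep_setsD[OF ind])
    show "\<forall>j\<in>{1..n}. X j -` {..y} \<inter> space M \<in> sigma_sets (space M) {X j -` A \<inter> space M |A. A \<in> sets borel}"
    proof
      fix j assume "j \<in> {1..n}"
      have "X j -` {..y} \<inter> space M \<in> {X j -` A \<inter> space M |A. A \<in> sets borel}"
        by (auto intro!: exI[of _ "{..y}"])
      then show "X j -` {..y} \<inter> space M \<in> sigma_sets (space M) {X j -` A \<inter> space M |A. A \<in> sets borel}"
        by (rule sigma_sets.Basic)
    qed
  qed (use assms in auto)
  also have "\<dots> = (\<Prod>k\<in>{1..n}. prob (X 1 -` {..y} \<inter> space M))"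
    by (intro prod.cong refl prob_same) auto
  also have "X 1 -` {..y} \<inter> space M = {\<omega> \<in> space M. X 1 \<omega> \<le> y}" by auto
  finally show ?thesis using eq by simp
qed

lemma mgf_bound:
  assumes int1: "integrable M (X 1)" and mean: "expectation (X 1) = 0"
    and int2: "integrable M (\<lambda>\<omega>. (X 1 \<omega>)\<^sup>2)" and t0: "t0 > 0"
    and mgf: "\<And>t. 0 \<le> t \<Longrightarrow> t < t0 \<Longrightarrow> integrable M (\<lambda>\<omega>. exp (t * X 1 \<omega>))"
  obtains K t1 where "K > 0" "t1 > 0" "t1 < t0"
    "\<And>t. 0 \<le> t \<Longrightarrow> t \<le> t1 \<Longrightarrow> (\<integral>\<omega>. exp (t * X 1 \<omega>) \<partial>M) \<le> exp (K * t\<^sup>2)"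
proof -
  define t1 where "t1 = t0 / 3"
  have t1: "t1 > 0" "t1 < t0" "2 * t1 < t0" using t0 by (auto simp: t1_def)
  have i2: "integrable M (\<lambda>\<omega>. exp (2 * t1 * X 1 \<omega>))" using mgf[of "2*t1"] t1 by auto
  define K0 where "K0 = (\<integral>\<omega>. (X 1 \<omega>)\<^sup>2 \<partial>M) / 2 + (\<integral>\<omega>. exp (2 * t1 * X 1 \<omega>) \<partial>M) / t1\<^sup>2"
  have K0: "K0 \<ge> 0" unfolding K0_def by (intro add_nonneg_nonneg divide_nonneg_nonneg integral_nonneg_AE) auto
  define K where "K = K0 + 1"
  have K: "K > 0" using K0 by (simp add: K_def)
  have "(\<integral>\<omega>. exp (t * X 1 \<omega>) \<partial>M) \<le> exp (K * t\<^sup>2)" if t: "0 \<le> t" "t \<le> t1" for t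
  proof -
    have it: "integrable M (\<lambda>\<omega>. exp (t * X 1 \<omega>))" using mgf t t1 by auto
    have ib: "integrable M (\<lambda>\<omega>. 1 + t * X 1 \<omega> + t\<^sup>2 * ((X 1 \<omega>)\<^sup>2 / 2 + exp (2 * t1 * X 1 \<omega>) / t1\<^sup>2))"
      using int1 int2 i2 by auto
    have "(\<integral>\<omega>. exp (t * X 1 \<omega>) \<partial>M) \<le> (\<integral>\<omega>. 1 + t * X 1 \<omega> + t\<^sup>2 * ((X 1 \<omega>)\<^sup>2 / 2 + exp (2 * t1 * X 1 \<omega>) / t1\<^sup>2) \<partial>M)"
      by (rule integral_mono[OF it ib]) (rule exp_quad_bound[OF t1(1) t])
    also have "\<dots> = 1 + t * expectation (X 1) + t\<^sup>2 * K0"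
      using int1 int2 i2 by (simp add: K0_def prob_space)
    also have "\<dots> \<le> 1 + K * t\<^sup>2" using mean by (simp add: K_def algebra_simps)
    also have "\<dots> \<le> exp (K * t\<^sup>2)" by (rule exp_ge_add_one_self[simplified add.commute])
    finally show ?thesis .
  qed
  then show ?thesis using that K t1 by blast
qed

lemma psum_diff:
  assumes "i \<le> j"
  shows "psum x j - psum x i = (\<Sum>k\<in>{Suc i..j}. x k)"
proof -
  have "{1..j} = {1..i} \<union> {Suc i..j}" using assms by auto
  then have "psum x j = psum x i + (\<Sum>k\<in>{Suc i..j}. x k)"
    unfolding psum_def by (simp add: sum.union_disjoint ivl_disj_int)
  then show ?thesis by simp
qed

lemma window_tail:
  assumes K: "K > 0" and t1: "t1 > 0"
    and phi: "\<And>t. 0 \<le> t \<Longrightarrow> t \<le> t1 \<Longrightarrow> integrable M (\<lambda>\<omega>. exp (t * X 1 \<omega>)) \<and> (\<integral>\<omega>. exp (t * X 1 \<omega>) \<partial>M) \<le> exp (K * t\<^sup>2)"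
    and ij: "i < j" and y: "y \<ge> 0"
  shows "prob {\<omega> \<in> space M. y < (psum (\<lambda>k. X k \<omega>) j - psum (\<lambda>k. X k \<omega>) i) / sqrt (real (j - i))}
     \<le> exp (- min (y\<^sup>2 / (4 * K)) (t1 * y * sqrt (real (j - i)) / 2))"
proof -
  define m where "m = j - i"
  define r where "r = sqrt (real m)"
  have m: "m \<ge> 1" using ij by (simp add: m_def)
  have r: "r > 0" "r\<^sup>2 = real m" using m by (auto simp: r_def)
  let ?I = "{Suc i..j}"
  have cI: "card ?I = m" by (simp add: m_def)
  have I: "finite ?I" "?I \<subseteq> {1..}" by auto
  obtain t where t: "0 \<le> t" "t \<le> t1" and tb: "- (t * (y * r)) + K * t\<^sup>2 * r\<^sup>2 \<le> - min (y\<^sup>2 / (4 * K)) (t1 * y * r / 2)"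
  proof (cases "y / (2 * K * r) \<le> t1")
    case True
    show ?thesis
    proof (rule that[of "y / (2 * K * r)"])
      show "0 \<le> y / (2 * K * r)" using y K r by simp
      show "y / (2 * K * r) \<le> t1" by fact
      have "- (y / (2 * K * r) * (y * r)) + K * (y / (2 * K * r))\<^sup>2 * r\<^sup>2 = - (y\<^sup>2 / (4 * K))"
        using K r(1) by (simp add: field_simps power2_eq_square)
      moreover have "min (y\<^sup>2 / (4 * K)) (t1 * y * r / 2) \<le> y\<^sup>2 / (4 * K)" by simp
      ultimately show "- (y / (2 * K * r) * (y * r)) + K * (y / (2 * K * r))\<^sup>2 * r\<^sup>2 \<le> - min (y\<^sup>2 / (4 * K)) (t1 * y * r / 2)"
        by linarith
    qed
  next
    case False
    show ?thesis
    proof (rule that[of t1])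
      show "0 \<le> t1" "t1 \<le> t1" using t1 by auto
      have "t1 < y / (2 * K * r)" using False by simp
      hence "t1 * (2 * K * r) < y" using K r(1) by (subst (asm) pos_less_divide_eq) auto
      hence "2 * K * r * t1 < y" by (simp add: mult_ac)
      have e: "K * t1\<^sup>2 * r\<^sup>2 = (2*K*r*t1) * (t1*r) / 2" by (simp add: power2_eq_square)
      have "(2*K*r*t1) * (t1*r) / 2 \<le> y * (t1*r) / 2"
        using \<open>2 * K * r * t1 < y\<close> t1 r by (intro divide_right_mono mult_right_mono) auto
      hence "K * t1\<^sup>2 * r\<^sup>2 \<le> y * (t1*r) / 2" using e by linarith
      moreover have "y * (t1*r) / 2 = t1 * y * r / 2" by (simp add: mult_ac)
      ultimately have "K * t1\<^sup>2 * r\<^sup>2 \<le> t1 * y * r / 2" by linarith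
      moreover have "min (y\<^sup>2 / (4 * K)) (t1 * y * r / 2) \<le> t1 * y * r / 2" by simp
      ultimately show "- (t1 * (y * r)) + K * t1\<^sup>2 * r\<^sup>2 \<le> - min (y\<^sup>2 / (4 * K)) (t1 * y * r / 2)"
        by (simp add: algebra_simps)
    qed
  qed
  have sub: "{\<omega> \<in> space M. y < (psum (\<lambda>k. X k \<omega>) j - psum (\<lambda>k. X k \<omega>) i) / sqrt (real (j - i))}
     \<subseteq> {\<omega> \<in> space M. y * r \<le> (\<Sum>k\<in>?I. X k \<omega>)}"
    using ij r by (auto simp: psum_diff m_def r_def pos_less_divide_eq less_imp_le)
  have mk[measurable]: "X k \<in> borel_measurable M" if "k \<in> ?I" for k using measX that by auto
  have ms: "{\<omega> \<in> space M. y * r \<le> (\<Sum>k\<in>?I. X k \<omega>)} \<in> events" by measurable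
  have "prob {\<omega> \<in> space M. y < (psum (\<lambda>k. X k \<omega>) j - psum (\<lambda>k. X k \<omega>) i) / sqrt (real (j - i))}
      \<le> prob {\<omega> \<in> space M. y * r \<le> (\<Sum>k\<in>?I. X k \<omega>)}"
    by (rule finite_measure_mono[OF sub ms])
  also have "\<dots> \<le> exp (- (t * (y * r))) * (\<integral>\<omega>. exp (t * X 1 \<omega>) \<partial>M) ^ card ?I"
    using phi[OF t] by (intro chernoff[OF I]) (use t in auto)
  also have "\<dots> \<le> exp (- (t * (y * r))) * exp (K * t\<^sup>2) ^ m"
  proof -
    have "0 \<le> (\<integral>\<omega>. exp (t * X 1 \<omega>) \<partial>M)" by (rule integral_nonneg_AE) simp
    hence "(\<integral>\<omega>. exp (t * X 1 \<omega>) \<partial>M) ^ m \<le> exp (K * t\<^sup>2) ^ m"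
      using phi[OF t] by (intro power_mono) auto
    then show ?thesis unfolding cI by (rule mult_left_mono) simp
  qed
  also have "\<dots> = exp (- (t * (y * r)) + K * t\<^sup>2 * r\<^sup>2)"
  proof -
    have "exp (K * t\<^sup>2) ^ m = exp (K * t\<^sup>2 * r\<^sup>2)"
      using r(2) by (simp add: exp_of_nat_mult[symmetric] mult.commute)
    then show ?thesis by (simp add: exp_add[symmetric])
  qed
  also have "\<dots> \<le> exp (- min (y\<^sup>2 / (4 * K)) (t1 * y * r / 2))" using tb by simp
  finally show ?thesis by (simp add: r_def m_def)
qed

lemma psum_meas[measurable]: "(\<lambda>\<omega>. psum (\<lambda>k. X k \<omega>) j) \<in> borel_measurable M"
  unfolding psum_def by (intro borel_measurable_sum measX) auto

lemma core:
  assumes n: "n \<ge> 1" and L: "1 \<le> L" and d2: "\<delta>2 \<ge> 0"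
    and hA: "prob {\<omega> \<in> space M. \<forall>k\<in>{1..n}. X k \<omega> \<le> y} \<le> \<delta>1"
    and hB: "\<And>i j. i < j \<Longrightarrow> j \<le> n \<Longrightarrow> L < real (j - i) \<Longrightarrow>
       prob {\<omega> \<in> space M. y < (psum (\<lambda>k. X k \<omega>) j - psum (\<lambda>k. X k \<omega>) i) / sqrt (real (j - i))} \<le> \<delta>2"
  shows "prob {\<omega> \<in> space M. Mn (psum (\<lambda>k. X k \<omega>)) n = Mn_restr (psum (\<lambda>k. X k \<omega>)) n 1 L}
     \<ge> 1 - \<delta>1 - (real n + 1)\<^sup>2 * \<delta>2"
proof -
  define v where "v = (\<lambda>(i,j) \<omega>. (psum (\<lambda>k. X k \<omega>) j - psum (\<lambda>k. X k \<omega>) i) / sqrt (real (j - i)))"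
  have vm[measurable]: "v p \<in> borel_measurable M" for p
    unfolding v_def by (cases p) simp
  define P where "P = {(i,j). i < j \<and> j \<le> n \<and> L < real (j - i)}"
  have Psub: "P \<subseteq> {..n} \<times> {..n}" by (auto simp: P_def)
  have fP: "finite P" using Psub finite_subset by blast
  have cP: "card P \<le> (n + 1)\<^sup>2"
  proof -
    have "card P \<le> card ({..n} \<times> {..n})" by (rule card_mono[OF _ Psub]) simp
    then show ?thesis by (simp add: card_cartesian_product power2_eq_square)
  qed
  define B1 where "B1 = {\<omega> \<in> space M. \<forall>k\<in>{1..n}. X k \<omega> \<le> y}"
  define B2 where "B2 = (\<Union>p\<in>P. {\<omega> \<in> space M. y < v p \<omega>})"
  define E where "E = {\<omega> \<in> space M. Mn (psum (\<lambda>k. X k \<omega>)) n = Mn_restr (psum (\<lambda>k. X k \<omega>)) n 1 L}"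
  have mX[measurable]: "X k \<in> borel_measurable M" if "k \<in> {1..n}" for k using measX that by auto
  have B1m: "B1 \<in> events" unfolding B1_def by measurable
  have B2m: "B2 \<in> events" unfolding B2_def using fP by measurable
  have fA: "finite {(i::nat,j). i < j \<and> j \<le> n}"
    by (rule finite_subset[of _ "{..n} \<times> {..n}"]) auto
  have fB: "finite {(i::nat,j). i < j \<and> j \<le> n \<and> 1 \<le> real (j - i) \<and> real (j - i) \<le> L}"
    by (rule finite_subset[OF _ fA]) auto
  have Mnm: "(\<lambda>\<omega>. Mn (psum (\<lambda>k. X k \<omega>)) n) \<in> borel_measurable M"
    unfolding Mn_alt by (intro borel_measurable_Max fA) (auto simp: split_beta)
  have Mnrm: "(\<lambda>\<omega>. Mn_restr (psum (\<lambda>k. X k \<omega>)) n 1 L) \<in> borel_measurable M"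
    unfolding Mn_restr_alt by (intro borel_measurable_Max fB) (auto simp: split_beta)
  have Em: "E \<in> events" unfolding E_def using Mnm Mnrm by measurable
  have cover: "space M - E \<subseteq> B1 \<union> B2"
  proof
    fix \<omega> assume w: "\<omega> \<in> space M - E"
    show "\<omega> \<in> B1 \<union> B2"
    proof (rule ccontr)
      assume "\<omega> \<notin> B1 \<union> B2"
      then obtain k where k: "k \<in> {1..n}" "y < X k \<omega>" using w by (auto simp: B1_def not_le)
      have long: "\<And>i j. i < j \<Longrightarrow> j \<le> n \<Longrightarrow> L < real (j - i) \<Longrightarrow> (psum (\<lambda>k. X k \<omega>) j - psum (\<lambda>k. X k \<omega>) i) / sqrt (real (j - i)) \<le> y"
      proof -
        fix i j assume "i < j" "j \<le> n" "L < real (j - i)"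
        then have "(i,j) \<in> P" by (simp add: P_def)
        then have "\<not> y < v (i,j) \<omega>" using \<open>\<omega> \<notin> B1 \<union> B2\<close> w unfolding B2_def by blast
        then show "(psum (\<lambda>k. X k \<omega>) j - psum (\<lambda>k. X k \<omega>) i) / sqrt (real (j - i)) \<le> y"
          by (simp add: v_def not_less)
      qed
      have "psum (\<lambda>k. X k \<omega>) k - psum (\<lambda>k. X k \<omega>) (k - 1) = X k \<omega>"
        using k by (subst psum_diff) auto
      then have "Mn (psum (\<lambda>k. X k \<omega>)) n = Mn_restr (psum (\<lambda>k. X k \<omega>)) n 1 L"
        using k by (intro max_eq_pure[OF L k(1) _ long]) auto
      then show False using w by (auto simp: E_def)
    qed
  qed
  have "prob (space M - E) \<le> prob (B1 \<union> B2)"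
    using cover B1m B2m by (intro finite_measure_mono) auto
  also have "\<dots> \<le> prob B1 + prob B2" using B1m B2m by (rule measure_Un_le)
  finally have s1: "prob (space M - E) \<le> prob B1 + prob B2" .
  have "prob B2 \<le> (\<Sum>p\<in>P. prob {\<omega> \<in> space M. y < v p \<omega>})"
    unfolding B2_def by (rule measure_UNION_le[OF fP]) measurable
  also have "\<dots> \<le> of_nat (card P) * \<delta>2"
    by (rule sum_bounded_above) (auto simp: P_def v_def intro!: hB)
  also have "\<dots> \<le> (real n + 1)\<^sup>2 * \<delta>2"
  proof -
    have "real (card P) \<le> (real n + 1)\<^sup>2" using cP by (metis of_nat_1 of_nat_add of_nat_le_iff of_nat_power)
    then show ?thesis using d2 by (intro mult_right_mono) auto
  qed
  finally have "prob B2 \<le> (real n + 1)\<^sup>2 * \<delta>2" .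
  then have "prob (space M - E) \<le> \<delta>1 + (real n + 1)\<^sup>2 * \<delta>2" using s1 hA[folded B1_def] by linarith
  moreover have "prob E = 1 - prob (space M - E)" using Em by (simp add: prob_compl)
  ultimately show ?thesis unfolding E_def by linarith
qed

end

theorem theorem1p6:
  fixes M :: "'a measure" and X :: "nat \<Rightarrow> 'a \<Rightarrow> real"
    and t0 \<alpha> a :: real
  assumes "prob_space M"
    and meas: "\<And>i. i \<ge> 1 \<Longrightarrow> X i \<in> borel_measurable M"
    and indep: "prob_space.indep_vars M (\<lambda>_. borel) X {1..}"
    and ident: "\<And>i. i \<ge> 1 \<Longrightarrow> distr M borel (X i) = distr M borel (X 1)"
    and int1: "integrable M (X 1)"
    and mean: "prob_space.expectation M (X 1) = 0"
    and int2: "integrable M (\<lambda>\<omega>. (X 1 \<omega>)\<^sup>2)"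
    and var: "prob_space.variance M (X 1) = 1"
    and t0: "t0 > 0"
    and mgf: "\<And>t. 0 \<le> t \<Longrightarrow> t < t0 \<Longrightarrow> integrable M (\<lambda>\<omega>. exp (t * X 1 \<omega>))"
    and alpha: "\<alpha> < 2"
    and tail: "\<forall>\<^sub>F x in at_top. measure M {\<omega> \<in> space M. X 1 \<omega> > x} > exp (- (x powr \<alpha>))"
    and a: "a > 0"
  shows "(\<lambda>n. measure M {\<omega> \<in> space M.
            Mn (psum (\<lambda>k. X k \<omega>)) n = Mn_restr (psum (\<lambda>k. X k \<omega>)) n 1 (a * ln (real n))})
         \<longlonglongrightarrow> 1"
proof -
  interpret iidX M X
  proof (rule iidX.intro[OF assms(1)], rule iidX_axioms.intro)
    show "\<And>i. 1 \<le> i \<Longrightarrow> X i \<in> borel_measurable M" by (fact meas)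
    show "prob_space.indep_vars M (\<lambda>_. borel) X {1..}" by (rule indep)
    show "\<And>i. 1 \<le> i \<Longrightarrow> distr M borel (X i) = distr M borel (X 1)" by (fact ident)
  qed
  obtain K t1 where K: "K > 0" and t1: "t1 > 0" "t1 < t0"
    and bd: "\<And>t. 0 \<le> t \<Longrightarrow> t \<le> t1 \<Longrightarrow> (\<integral>\<omega>. exp (t * X 1 \<omega>) \<partial>M) \<le> exp (K * t\<^sup>2)"
    using mgf_bound[OF int1 mean int2 t0 mgf] by blast
  have phi: "integrable M (\<lambda>\<omega>. exp (t * X 1 \<omega>)) \<and> (\<integral>\<omega>. exp (t * X 1 \<omega>) \<partial>M) \<le> exp (K * t\<^sup>2)"
    if "0 \<le> t" "t \<le> t1" for t using mgf[of t] bd[of t] that t1 by auto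
  define \<alpha>' where "\<alpha>' = max \<alpha> 1"
  define \<gamma> where "\<gamma> = 1 / \<alpha>'"
  have \<alpha>': "\<alpha>' \<ge> 1" "\<alpha> \<le> \<alpha>'" "\<alpha>' < 2" using alpha by (auto simp: \<alpha>'_def)
  have \<gamma>: "\<gamma> > 1/2" "\<gamma> > 0" "\<gamma> * \<alpha>' = 1" using \<alpha>' by (auto simp: \<gamma>_def field_simps)
  define u where "u = (\<lambda>n::nat. ln (real n) / 2)"
  define y where "y = (\<lambda>n. u n powr \<gamma>)"
  define f where "f = (\<lambda>n::nat. 1 - exp (- (real n * exp (- (ln (real n) / 2)))) - (real n + 1)\<^sup>2 * exp (- (3 * ln (real n))))"
  have ulim: "filterlim u at_top sequentially" unfolding u_def by real_asymp
  have ucomp: "eventually (\<lambda>n. P (u n)) sequentially" if "eventually P at_top" for P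
    using ulim that unfolding filterlim_iff by blast
  obtain X0 where X0: "\<And>x. x \<ge> X0 \<Longrightarrow> measure M {\<omega> \<in> space M. X 1 \<omega> > x} > exp (- (x powr \<alpha>))"
    using tail unfolding eventually_at_top_linorder by blast
  have ev1: "eventually (\<lambda>n. 1 \<le> a * ln (real n)) sequentially"
  proof -
    have "eventually (\<lambda>v. 1 / (2*a) \<le> v) at_top" by (rule eventually_ge_at_top)
    from ucomp[OF this] show ?thesis
      by eventually_elim (use a in \<open>auto simp: u_def field_simps\<close>)
  qed
  have ev2: "eventually (\<lambda>n. max X0 1 \<le> y n) sequentially"
    unfolding y_def by (rule ucomp[OF eventually_powr_ge[OF \<gamma>(2)]])
  have ev3: "eventually (\<lambda>n. 24 * K \<le> u n powr (2 * \<gamma> - 1)) sequentially"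
    by (rule ucomp[OF eventually_powr_ge]) (use \<gamma> in auto)
  have ev4: "eventually (\<lambda>n. 12 / (t1 * sqrt (2 * a)) \<le> u n powr (\<gamma> - 1/2)) sequentially"
    by (rule ucomp[OF eventually_powr_ge]) (use \<gamma> in auto)
  have ev5: "eventually (\<lambda>n. 0 < u n) sequentially"
    by (rule ucomp[OF eventually_gt_at_top])
  have ev6: "eventually (\<lambda>n::nat. n \<ge> 1) sequentially" by (rule eventually_ge_at_top)
  have key: "f n \<le> measure M {\<omega> \<in> space M.
            Mn (psum (\<lambda>k. X k \<omega>)) n = Mn_restr (psum (\<lambda>k. X k \<omega>)) n 1 (a * ln (real n))}"
    if n1: "n \<ge> 1" and L1: "1 \<le> a * ln (real n)" and y1: "max X0 1 \<le> y n"
      and c3: "24 * K \<le> u n powr (2 * \<gamma> - 1)" and c4: "12 / (t1 * sqrt (2 * a)) \<le> u n powr (\<gamma> - 1/2)"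
      and u0: "0 < u n" for n
  proof -
    define yy where "yy = y n"
    define uu where "uu = u n"
    have yy1: "yy \<ge> 1" "yy \<ge> X0" using y1 by (auto simp: yy_def)
    have lnn: "ln (real n) = 2 * uu" by (simp add: uu_def u_def)
    define p where "p = prob {\<omega> \<in> space M. X 1 \<omega> > yy}"
    have pgt: "p > exp (- (yy powr \<alpha>))" using X0[OF yy1(2)] by (simp add: p_def)
    have "yy powr \<alpha> \<le> yy powr \<alpha>'" using yy1 \<alpha>' by (intro powr_mono) auto
    also have "yy powr \<alpha>' = uu" unfolding yy_def y_def uu_def using \<gamma> u0 by (simp add: powr_powr)
    finally have "exp (- uu) \<le> exp (- (yy powr \<alpha>))" by simp
    with pgt have pge: "p \<ge> exp (- uu)" by linarith
    have compl: "prob {\<omega> \<in> space M. X 1 \<omega> \<le> yy} = 1 - p"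
    proof -
      have "{\<omega> \<in> space M. X 1 \<omega> \<le> yy} = space M - {\<omega> \<in> space M. X 1 \<omega> > yy}" by auto
      moreover have "{\<omega> \<in> space M. X 1 \<omega> > yy} \<in> events" using measX[of 1] by measurable
      ultimately show ?thesis by (simp add: prob_compl p_def)
    qed
    have p1: "p \<le> 1" by (simp add: p_def)
    have hA: "prob {\<omega> \<in> space M. \<forall>k\<in>{1..n}. X k \<omega> \<le> yy} \<le> exp (- (real n * exp (- (ln (real n) / 2))))"
    proof -
      have "prob {\<omega> \<in> space M. \<forall>k\<in>{1..n}. X k \<omega> \<le> yy} = (1 - p) ^ n"
        using all_le[OF n1] compl by simp
      also have "\<dots> \<le> exp (- p) ^ n"
      proof (rule power_mono)
        show "1 - p \<le> exp (- p)" using exp_ge_add_one_self[of "-p"] by simp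
      qed (use p1 in simp)
      also have "\<dots> = exp (- (real n * p))" by (simp add: exp_of_nat_mult[symmetric])
      also have "\<dots> \<le> exp (- (real n * exp (- (ln (real n) / 2))))"
        using pge lnn by (auto intro: mult_left_mono)
      finally show ?thesis .
    qed
    have hB: "prob {\<omega> \<in> space M. yy < (psum (\<lambda>k. X k \<omega>) j - psum (\<lambda>k. X k \<omega>) i) / sqrt (real (j - i))}
        \<le> exp (- (3 * ln (real n)))"
      if ij: "i < j" "j \<le> n" "a * ln (real n) < real (j - i)" for i j
    proof -
      have "prob {\<omega> \<in> space M. yy < (psum (\<lambda>k. X k \<omega>) j - psum (\<lambda>k. X k \<omega>) i) / sqrt (real (j - i))}
          \<le> exp (- min (yy\<^sup>2 / (4 * K)) (t1 * yy * sqrt (real (j - i)) / 2))"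
        using window_tail[OF K t1(1) phi ij(1)] yy1 by auto
      also have "\<dots> \<le> exp (- (3 * ln (real n)))"
      proof -
        have A: "3 * ln (real n) \<le> yy\<^sup>2 / (4 * K)"
        proof -
          have u1: "uu powr 1 = uu" using u0 by (simp add: uu_def)
          have "yy\<^sup>2 = uu powr \<gamma> * uu powr \<gamma>" by (simp add: power2_eq_square yy_def y_def uu_def)
          also have "\<dots> = uu powr (1 + (2 * \<gamma> - 1))" by (subst powr_add[symmetric]) simp
          also have "\<dots> = uu * uu powr (2 * \<gamma> - 1)" by (simp only: powr_add u1)
          finally have "yy\<^sup>2 \<ge> uu * (24 * K)" using c3 u0 by (simp add: uu_def mult_left_mono)
          then show ?thesis using K lnn by (simp add: field_simps)
        qed
        have B: "3 * ln (real n) \<le> t1 * yy * sqrt (real (j - i)) / 2"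
        proof -
          have "sqrt (2 * a * uu) \<le> sqrt (real (j - i))" using ij(3) lnn by (simp add: mult_ac)
          hence s1: "t1 * yy * sqrt (2 * a * uu) / 2 \<le> t1 * yy * sqrt (real (j - i)) / 2"
            using t1 yy1 by (intro divide_right_mono mult_left_mono) auto
          have "sqrt (2 * a * uu) = sqrt (2 * a) * uu powr (1/2)"
            using u0 a by (simp add: uu_def real_sqrt_mult powr_half_sqrt)
          hence "t1 * yy * sqrt (2 * a * uu) / 2 = t1 * sqrt (2 * a) / 2 * (uu powr \<gamma> * uu powr (1/2))"
            by (simp add: yy_def y_def uu_def mult_ac)
          also have "uu powr \<gamma> * uu powr (1/2) = uu * uu powr (\<gamma> - 1/2)"
          proof -
            have u1: "uu powr 1 = uu" using u0 by (simp add: uu_def)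
            have "uu powr \<gamma> * uu powr (1/2) = uu powr (1 + (\<gamma> - 1/2))" by (subst powr_add[symmetric]) (simp add: add.commute)
            also have "\<dots> = uu * uu powr (\<gamma> - 1/2)" by (simp only: powr_add u1)
            finally show ?thesis .
          qed
          finally have e: "t1 * yy * sqrt (2 * a * uu) / 2 = uu * (t1 * sqrt (2 * a) / 2 * uu powr (\<gamma> - 1/2))"
            by (simp add: mult_ac)
          have pos: "t1 * sqrt (2 * a) > 0" using t1 a by simp
          have "6 \<le> t1 * sqrt (2 * a) / 2 * uu powr (\<gamma> - 1/2)"
            using c4 pos by (simp add: uu_def pos_divide_le_eq mult_ac)
          hence "uu * 6 \<le> uu * (t1 * sqrt (2 * a) / 2 * uu powr (\<gamma> - 1/2))"
            using u0 by (intro mult_left_mono) (auto simp: uu_def)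
          then show ?thesis using s1 e lnn by linarith
        qed
        show ?thesis using A B by simp
      qed
      finally show ?thesis .
    qed
    have "1 - exp (- (real n * exp (- (ln (real n) / 2)))) - (real n + 1)\<^sup>2 * exp (- (3 * ln (real n)))
      \<le> prob {\<omega> \<in> space M. Mn (psum (\<lambda>k. X k \<omega>)) n = Mn_restr (psum (\<lambda>k. X k \<omega>)) n 1 (a * ln (real n))}"
      by (rule core[OF n1 L1 _ hA hB]) auto
    then show ?thesis by (simp add: f_def)
  qed
  have lower: "eventually (\<lambda>n. f n \<le> measure M {\<omega> \<in> space M.
            Mn (psum (\<lambda>k. X k \<omega>)) n = Mn_restr (psum (\<lambda>k. X k \<omega>)) n 1 (a * ln (real n))}) sequentially"
    using ev1 ev2 ev3 ev4 ev5 ev6 by eventually_elim (rule key)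
  have upper: "eventually (\<lambda>n. measure M {\<omega> \<in> space M.
            Mn (psum (\<lambda>k. X k \<omega>)) n = Mn_restr (psum (\<lambda>k. X k \<omega>)) n 1 (a * ln (real n))} \<le> 1) sequentially"
    by simp
  have flim: "f \<longlonglongrightarrow> 1" unfolding f_def by real_asymp
  show ?thesis by (rule tendsto_sandwich[OF lower upper flim tendsto_const])
qed

end
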